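(* Let $n\ge2$, let $R=\Bbbk\langle u,d\mid d^2u+ud^2,\ du^2+u^2d\rangle$, graded with $\deg u=\deg d=1$, let $\xi$ be a primitive $n$-th root of unity and let $G=\mathbb Z_n=\langle g\rangle$ act on $R$ by $g(u)=\xi u$, $g(d)=\xi^{-1}d$. In the skew group algebra $R\#\Bbbk G$ let $f_i=\frac1n\sum_{j=0}^{n-1}\xi^{ij}\#g^j$ for $i=0,\dots,n-1$, $f=f_0+\dots+f_{n-1}$, and $B=f(R\#\Bbbk G)f$, graded by the grading of $R$ with $\Bbbk G$ in degree $0$. Let $M$ be the adjacency matrix of the quiver $Q$ with vertices $\{0,\dots,n-1\}$ and arrows $u_i:i\to i+1$, $d_i:i+1\to i$ (indices mod $n$). Then the matrix-valued Hilbert series of $B$ with respect to $f_0,\dots,f_{n-1}$ is $h_B(t)=(I-Mt+It^2)^{-1}(1-t^2)^{-1}$ and the total Hilbert series is $h_B^{\mathrm{tot}}(t)=n(1-t)^{-2}(1-t^2)^{-1}$.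
   Context: $\Bbbk$ is an algebraically closed field of characteristic zero. The skew group algebra $R\#\Bbbk G$ is $R\otimes\Bbbk G$ with $(r\#g)(s\#h)=rg(s)\#gh$. The adjacency matrix $M$ has $(i,j)$ entry equal to the number of arrows from $i$ to $j$. For a graded algebra $B$ with complete set of degree-zero orthogonal idempotents $f_0,\dots,f_{n-1}$, the matrix-valued Hilbert series is $h_B(t)=\sum_kH_kt^k$ with $(H_k)_{ij}=\dim_\Bbbk f_iB_kf_j$, and the total Hilbert series $h_B^{\mathrm{tot}}(t)$ has as coefficient of $t^k$ the sum of entries of $H_k$. *)

theory Defs
  imports "Jordan_Normal_Form.Matrix"
          "HOL-Computational_Algebra.Formal_Power_Series"
          "HOL-Computational_Algebra.Polynomial"
          "HOL-Library.Function_Algebras"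
begin

text \<open>Words in the free algebra on u, d: True = u, False = d.
 Degree of a word = its length (deg u = deg d = 1).\<close>

type_synonym 'a free = "bool list \<Rightarrow> 'a"
type_synonym 'a skew = "bool list \<Rightarrow> nat \<Rightarrow> 'a"  (* F w m = coefficient of w # g^m *)

definition fscale :: "'a::field \<Rightarrow> 'a free \<Rightarrow> 'a free" where
  "fscale c p = (\<lambda>w. c * p w)"

definition sscale :: "'a::field \<Rightarrow> 'a skew \<Rightarrow> 'a skew" where
  "sscale c F = (\<lambda>w m. c * F w m)"

definition fmono :: "bool list \<Rightarrow> 'a::field free" where
  "fmono a = (\<lambda>w. if w = a then 1 else 0)"

definition fmul :: "'a::field free \<Rightarrow> 'a free \<Rightarrow> 'a free" where
  "fmul p q = (\<lambda>w. \<Sum>k\<le>length w. p (take k w) * q (drop k w))"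

definition rel1 :: "'a::field free" where
  "rel1 = fmono [False, False, True] + fmono [True, False, False]"
definition rel2 :: "'a::field free" where
  "rel2 = fmono [False, True, True] + fmono [True, True, False]"

text \<open>The two-sided ideal I generated by the relations (R = k<u,d>/I).\<close>
definition relIdeal :: "'a::field free set" where
  "relIdeal = module.span fscale
     {fmul (fmul (fmono a) r) (fmono b) | a b r. r = rel1 \<or> r = rel2}"

text \<open>Weight of a word: g(u) = xi u, g(d) = xi^-1 d, so g^m(w) = xi^(m * wt w) w.\<close>
definition wt :: "bool list \<Rightarrow> int" where
  "wt w = (\<Sum>b\<leftarrow>w. if b then 1 else -1)"

text \<open>Multiplication of the skew group algebra k<u,d> # kG (G = Z_n = <g>):
  (a # g^x)(b # g^y) = g^x(b)... i.e. a g^x(b) # g^(x+y).\<close>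
definition skmul :: "nat \<Rightarrow> 'a::field \<Rightarrow> 'a skew \<Rightarrow> 'a skew \<Rightarrow> 'a skew" where
  "skmul n \<xi> F H = (\<lambda>w c. if c < n then
      (\<Sum>k\<le>length w. \<Sum>x<n. F (take k w) x * \<xi> powi (int x * wt (drop k w))
                              * H (drop k w) ((c + n - x) mod n))
    else 0)"

definition skdeg :: "nat \<Rightarrow> nat \<Rightarrow> 'a::field skew set" where
  "skdeg n k = {F. (\<forall>w m. (m \<ge> n \<or> length w \<noteq> k) \<longrightarrow> F w m = 0)}"

text \<open>Degree-k part of the ideal I # kG (kernel of k<u,d> # kG \<rightarrow> R # kG).\<close>
definition idealdeg :: "nat \<Rightarrow> nat \<Rightarrow> 'a::field skew set" where
  "idealdeg n k = {F \<in> skdeg n k. \<forall>m<n. (\<lambda>w. F w m) \<in> relIdeal}"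

definition fidem :: "nat \<Rightarrow> 'a::field \<Rightarrow> nat \<Rightarrow> 'a skew" where
  "fidem n \<xi> i = (\<lambda>w m. if w = [] \<and> m < n then inverse (of_nat n) * \<xi> ^ (i * m) else 0)"

definition ftot :: "nat \<Rightarrow> 'a::field \<Rightarrow> 'a skew" where
  "ftot n \<xi> = (\<Sum>i<n. fidem n \<xi> i)"

text \<open>Representatives of f_i B_k f_j, where B = f (R # kG) f.\<close>
definition cornerRep :: "nat \<Rightarrow> 'a::field \<Rightarrow> nat \<Rightarrow> nat \<Rightarrow> nat \<Rightarrow> 'a skew set" where
  "cornerRep n \<xi> k i j =
     {skmul n \<xi> (skmul n \<xi> (fidem n \<xi> i)
        (skmul n \<xi> (skmul n \<xi> (ftot n \<xi>) X) (ftot n \<xi>))) (fidem n \<xi> j) | X. X \<in> skdeg n k}"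

text \<open>dim_k f_i B_k f_j: the dimension of the image of cornerRep in the quotient
  (degree-k part of k<u,d> # kG) / (degree-k part of I # kG),
  computed as dim (V + J) - dim J.\<close>
definition hdim :: "nat \<Rightarrow> 'a::field \<Rightarrow> nat \<Rightarrow> nat \<Rightarrow> nat \<Rightarrow> nat" where
  "hdim n \<xi> k i j =
     vector_space.dim sscale (cornerRep n \<xi> k i j \<union> idealdeg n k)
     - vector_space.dim sscale (idealdeg n (k::nat) :: 'a skew set)"

definition hilbB :: "nat \<Rightarrow> 'a::field \<Rightarrow> int fps mat" where
  "hilbB n \<xi> = mat n n (\<lambda>(i, j). Abs_fps (\<lambda>k. int (hdim n \<xi> k i j)))"

definition hilbB_tot :: "nat \<Rightarrow> 'a::field \<Rightarrow> int fps" where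
  "hilbB_tot n \<xi> = Abs_fps (\<lambda>k. \<Sum>i<n. \<Sum>j<n. int (hdim n \<xi> k i j))"

text \<open>The quiver Q: vertices 0..n-1, arrows u_i : i \<rightarrow> i+1 (Inl i), d_i : i+1 \<rightarrow> i (Inr i).\<close>
definition qarrows :: "nat \<Rightarrow> (nat + nat) set" where
  "qarrows n = Inl ` {..<n} \<union> Inr ` {..<n}"

definition qsrc :: "nat \<Rightarrow> nat + nat \<Rightarrow> nat" where
  "qsrc n a = (case a of Inl i \<Rightarrow> i | Inr i \<Rightarrow> (i + 1) mod n)"

definition qtgt :: "nat \<Rightarrow> nat + nat \<Rightarrow> nat" where
  "qtgt n a = (case a of Inl i \<Rightarrow> (i + 1) mod n | Inr i \<Rightarrow> i)"

definition adjM :: "nat \<Rightarrow> nat mat" where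
  "adjM n = mat n n (\<lambda>(i, j). card {a \<in> qarrows n. qsrc n a = i \<and> qtgt n a = j})"

end

theory Submission
  imports Defs
begin


definition nw :: "nat \<Rightarrow> nat \<Rightarrow> nat \<Rightarrow> bool list" where
  "nw a b c = replicate a True @ concat (replicate b [False, True]) @ replicate c False"

fun ninv :: "bool list \<Rightarrow> nat" where
  "ninv [] = 0"
| "ninv (x # w) = (if x then ninv w else count_list w True + ninv w)"

fun evu :: "bool list \<Rightarrow> bool \<Rightarrow> nat" where
  "evu [] p = 0"
| "evu (x # w) p = (if x \<and> p then 1 else 0) + evu w (\<not> p)"

definition wkey :: "bool list \<Rightarrow> nat \<times> nat \<times> nat" where
  "wkey w = (length w, count_list w True, evu w True)"

definition sgnw :: "bool list \<Rightarrow> 'a::field" where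
  "sgnw w = (-1) ^ (ninv w div 2)"

lemma ninv_append: "ninv (x @ z) = ninv x + count_list x False * count_list z True + ninv z"
  by (induction x) (auto simp: algebra_simps)

lemma evu_append: "evu (x @ z) p = evu x p + evu z (if even (length x) then p else \<not> p)"
  by (induction x arbitrary: p) auto

lemma ninv_r1: "ninv (x @ [False,False,True] @ y) = ninv (x @ [True,False,False] @ y) + 2"
  by (simp add: ninv_append algebra_simps)
lemma ninv_r2: "ninv (x @ [False,True,True] @ y) = ninv (x @ [True,True,False] @ y) + 2"
  by (simp add: ninv_append algebra_simps)
lemma wkey_r1: "wkey (x @ [False,False,True] @ y) = wkey (x @ [True,False,False] @ y)"
  by (simp add: wkey_def evu_append)
lemma wkey_r2: "wkey (x @ [False,True,True] @ y) = wkey (x @ [True,True,False] @ y)"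
  by (simp add: wkey_def evu_append)

lemma nw_Suc_a: "nw (Suc a) b c = True # nw a b c" by (simp add: nw_def)
lemma nw_0_Suc: "nw 0 (Suc b) c = False # True # nw 0 b c" by (simp add: nw_def)
lemma nw_0_0: "nw 0 0 c = replicate c False" by (simp add: nw_def)

lemma normal_or_factor:
  "(\<exists>a b c. w = nw a b c) \<or> (\<exists>x y. w = x @ [False,False,True] @ y \<or> w = x @ [False,True,True] @ y)"
proof (induction w)
  case Nil
  then show ?case by (auto simp: nw_def intro!: exI[of _ 0])
next
  case (Cons h w)
  show ?case
  proof (cases "\<exists>a b c. w = nw a b c")
    case False
    then obtain x y where "w = x @ [False,False,True] @ y \<or> w = x @ [False,True,True] @ y"
      using Cons by blast
    then show ?thesis by (metis append_Cons)
  next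
    case True
    then obtain a b c where w: "w = nw a b c" by blast
    show ?thesis
    proof (cases h)
      case True then show ?thesis using w nw_Suc_a by metis
    next
      case hF: False
      show ?thesis
      proof (cases a)
        case 0
        show ?thesis
        proof (cases b)
          case 0
          then show ?thesis using w \<open>a = 0\<close> hF
            by (metis nw_0_0 replicate_Suc)
        next
          case (Suc b')
          then have "h # w = [] @ [False,False,True] @ nw 0 b' c"
            using w \<open>a = 0\<close> hF nw_0_Suc by simp
          then show ?thesis by blast
        qed
      next
        case (Suc a')
        show ?thesis
        proof (cases a')
          case 0
          then have "h # w = nw 0 (Suc b) c" using w Suc hF by (simp add: nw_Suc_a nw_0_Suc nw_def)
          then show ?thesis by blast
        next
          case (Suc a'')
          then have "h # w = [] @ [False,True,True] @ nw a'' b c"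
            using w \<open>a = Suc a'\<close> hF by (simp add: nw_Suc_a)
          then show ?thesis by blast
        qed
      qed
    qed
  qed
qed

lemma evu_repT: "evu (replicate a True) p = (if p then (a + 1) div 2 else a div 2)"
  by (induction a arbitrary: p) auto
lemma evu_repF: "evu (replicate a False) p = 0"
  by (induction a arbitrary: p) auto
lemma evu_FT: "evu (concat (replicate b [False, True])) p = (if p then 0 else b)"
  by (induction b) auto

lemma len_nw: "length (nw a b c) = a + 2 * b + c"
  by (simp add: nw_def length_concat sum_list_replicate)
lemma cnt_nw: "count_list (nw a b c) True = a + b"
proof -
  have "count_list (concat (replicate b [False, True])) True = b"
    by (induction b) auto
  moreover have "count_list (replicate c False) True = 0" by (induction c) auto
  moreover have "count_list (replicate a True) True = a" by (induction a) auto
  ultimately show ?thesis by (simp add: nw_def)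
qed
lemma evu_nw: "evu (nw a b c) True = (a + 1) div 2 + (if even a then 0 else b)"
  by (simp add: nw_def evu_append evu_repT evu_repF evu_FT length_concat sum_list_replicate)

lemma wkey_nw_inj:
  assumes "wkey (nw a b c) = wkey (nw a' b' c')"
  shows "a = a' \<and> b = b' \<and> c = c'"
proof -
  have e1: "a + 2 * b + c = a' + 2 * b' + c'" and e2: "a + b = a' + b'"
   and e3: "(a + 1) div 2 + (if even a then 0 else b) = (a' + 1) div 2 + (if even a' then 0 else b')"
    using assms by (auto simp: wkey_def len_nw cnt_nw evu_nw)
  have "a = a'"
  proof (cases "even a"; cases "even a'")
    assume "even a" "even a'" then show ?thesis using e3 by (auto elim!: evenE)
  next
    assume "even a" "odd a'" then show ?thesis using e2 e3 by (auto elim!: evenE oddE)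
  next
    assume "odd a" "even a'" then show ?thesis using e2 e3 by (auto elim!: evenE oddE)
  next
    assume "odd a" "odd a'" then show ?thesis using e2 e3 by (auto elim!: oddE)
  qed
  then show ?thesis using e1 e2 by auto
qed


interpretation fv: vector_space "fscale :: 'a::field \<Rightarrow> 'a free \<Rightarrow> 'a free"
  by unfold_locales (auto simp: fscale_def algebra_simps fun_eq_iff)

lemma fmul_fmono: "fmul (fmono a) (fmono b) = (fmono (a @ b) :: 'a::field free)"
proof -
  have *: "fmul (fmono a) (fmono b) w = (fmono (a @ b) w :: 'a)" for w :: "bool list"
  proof -
    have eq: "(take k w = a \<and> drop k w = b) \<longleftrightarrow> (k = length a \<and> w = a @ b)" if "k \<le> length w" for k
      using that by (auto simp: append_eq_conv_conj min_def)
    have "fmul (fmono a) (fmono b) w = (\<Sum>k\<le>length w. if k = length a \<and> w = a @ b then (1::'a) else 0)"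
      unfolding fmul_def fmono_def by (intro sum.cong refl) (use eq in auto)
    also have "\<dots> = fmono (a @ b) w"
      by (auto simp: fmono_def sum.delta')
    finally show ?thesis .
  qed
  show ?thesis by (rule ext) (rule *)
qed

lemma fmul_add_right: "fmul p (q + r) = fmul p q + (fmul p r :: 'a::field free)"
  by (auto simp: fmul_def fun_eq_iff distrib_left sum.distrib)
lemma fmul_add_left: "fmul (p + q) r = fmul p r + (fmul q r :: 'a::field free)"
  by (auto simp: fmul_def fun_eq_iff distrib_right sum.distrib)

lemma gen1: "fmul (fmul (fmono x) rel1) (fmono y) =
   fmono (x @ [False,False,True] @ y) + (fmono (x @ [True,False,False] @ y) :: 'a::field free)"
  by (simp add: rel1_def fmul_add_right fmul_add_left fmul_fmono)
lemma gen2: "fmul (fmul (fmono x) rel2) (fmono y) =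
   fmono (x @ [False,True,True] @ y) + (fmono (x @ [True,True,False] @ y) :: 'a::field free)"
  by (simp add: rel2_def fmul_add_right fmul_add_left fmul_fmono)

lemma gen1_in: "fmono (x @ [False,False,True] @ y) + fmono (x @ [True,False,False] @ y) \<in> (relIdeal :: 'a::field free set)"
  unfolding relIdeal_def gen1[symmetric] by (rule fv.span_base) blast
lemma gen2_in: "fmono (x @ [False,True,True] @ y) + fmono (x @ [True,True,False] @ y) \<in> (relIdeal :: 'a::field free set)"
  unfolding relIdeal_def gen2[symmetric] by (rule fv.span_base) blast

lemma finite_len: "finite {w::bool list. length w = n}"
  using finite_lists_length_eq[of "UNIV :: bool set" n] by simp

definition Phi :: "bool list \<Rightarrow> 'a::field free \<Rightarrow> 'a" where
  "Phi v p = (\<Sum>w\<in>{w. length w = length v}. if wkey w = wkey v then sgnw w * p w else 0)"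

lemma Phi_fmono: "Phi v (fmono u) = (if length u = length v \<and> wkey u = wkey v then sgnw u else 0)"
proof -
  have "Phi v (fmono u) = (\<Sum>w\<in>{w. length w = length v}. if w = u then (if wkey u = wkey v then sgnw u else 0) else 0)"
    unfolding Phi_def fmono_def by (intro sum.cong) auto
  also have "\<dots> = (if length u = length v \<and> wkey u = wkey v then sgnw u else 0)"
    by (simp add: sum.delta' finite_len)
  finally show ?thesis .
qed

lemma Phi_add: "Phi v (p + q) = Phi v p + Phi v q"
  unfolding Phi_def sum.distrib[symmetric] by (intro sum.cong refl) (simp add: distrib_left)
lemma Phi_scale: "Phi v (fscale c p) = c * Phi v p"
  unfolding Phi_def fscale_def sum_distrib_left by (intro sum.cong refl) simp
lemma Phi_zero: "Phi v 0 = 0"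
  unfolding Phi_def by (intro sum.neutral) simp

lemma sgnw_r1: "sgnw (x @ False # False # True # y) = - (sgnw (x @ True # False # False # y) :: 'a::field)"
  using ninv_r1[of x y] by (simp add: sgnw_def)
lemma sgnw_r2: "sgnw (x @ False # True # True # y) = - (sgnw (x @ True # True # False # y) :: 'a::field)"
  using ninv_r2[of x y] by (simp add: sgnw_def)

lemma Phi_ideal: assumes "p \<in> (relIdeal :: 'a::field free set)" shows "Phi v p = 0"
proof -
  have "p \<in> fv.span {fmul (fmul (fmono a) r) (fmono b) | a b r. r = rel1 \<or> r = rel2}"
    using assms by (simp add: relIdeal_def)
  then show ?thesis
  proof (induction rule: fv.span_induct_alt)
    case base then show ?case by (rule Phi_zero)
  next
    case (step c x y)
    then obtain a b r where x: "x = fmul (fmul (fmono a) r) (fmono b)" "r = rel1 \<or> r = rel2" by blast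
    have "Phi v x = 0"
      using x(2)
    proof
      assume "r = rel1"
      then show ?thesis using wkey_r1[of a b]
        by (auto simp add: x gen1 Phi_add Phi_fmono sgnw_r1)
    next
      assume "r = rel2"
      then show ?thesis using wkey_r2[of a b]
        by (auto simp add: x gen2 Phi_add Phi_fmono sgnw_r2)
    qed
    then show ?case using step(2) by (simp only: Phi_add Phi_scale) simp
  qed
qed

lemma reduce:
  "\<exists>a b c s. length (nw a b c) = length w \<and> count_list (nw a b c) True = count_list w True
     \<and> (s = 1 \<or> s = -1) \<and> fmono w - fscale s (fmono (nw a b c)) \<in> (relIdeal :: 'a::field free set)"
proof (induction "ninv w" arbitrary: w rule: less_induct)
  case less
  show ?case
  proof (cases "\<exists>a b c. w = nw a b c")
    case True
    then obtain a b c where w: "w = nw a b c" by blast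
    have "fmono w - fscale 1 (fmono (nw a b c)) = (0 :: 'a free)"
      by (simp add: w fscale_def)
    then have "fmono w - fscale 1 (fmono (nw a b c)) \<in> (relIdeal :: 'a free set)"
      unfolding relIdeal_def by (simp only: fv.span_zero)
    then show ?thesis using w by blast
  next
    case False
    then obtain x y where xy: "w = x @ [False,False,True] @ y \<or> w = x @ [False,True,True] @ y"
      using normal_or_factor by blast
    obtain w' where lt: "ninv w' < ninv w" and ln: "length w' = length w" and ct: "count_list w' True = count_list w True"
      and g: "fmono w + fmono w' \<in> (relIdeal :: 'a free set)"
    proof (cases "w = x @ [False,False,True] @ y")
      case True
      show ?thesis
        by (rule that[of "x @ [True,False,False] @ y"]) (use True ninv_r1[of x y] gen1_in[of x y] in simp_all)
    next
      case False
      then have w: "w = x @ [False,True,True] @ y" using xy by blast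
      show ?thesis
        by (rule that[of "x @ [True,True,False] @ y"]) (use w ninv_r2[of x y] gen2_in[of x y] in simp_all)
    qed
    obtain a b c s where H: "length (nw a b c) = length w'" "count_list (nw a b c) True = count_list w' True"
      "s = 1 \<or> s = -1" "fmono w' - fscale s (fmono (nw a b c)) \<in> (relIdeal :: 'a free set)"
      using less(1)[OF lt] by blast
    have "fmono w - fscale (-s) (fmono (nw a b c)) = (fmono w + fmono w') - (fmono w' - fscale s (fmono (nw a b c)) :: 'a free)"
      by (simp add: fscale_def fun_eq_iff)
    also have "\<dots> \<in> relIdeal" using g H(4) unfolding relIdeal_def by (rule fv.span_diff)
    finally have "fmono w - fscale (-s) (fmono (nw a b c)) \<in> (relIdeal :: 'a free set)" .
    moreover have "-s = 1 \<or> -s = -1" using H(3) by auto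
    ultimately show ?thesis using H(1,2) ln ct by metis
  qed
qed


lemma sum_app: "(\<Sum>i\<in>A. F i) x = (\<Sum>i\<in>A. F i x)"
  by (induction A rule: infinite_finite_induct) auto

locale rou =
  fixes n :: nat and \<xi> :: "'a::field_char_0"
  assumes n2: "n \<ge> 2" and xin: "\<xi> ^ n = 1" and prim: "\<forall>m. 0 < m \<and> m < n \<longrightarrow> \<xi> ^ m \<noteq> 1"
begin

lemma npos: "n > 0" using n2 by simp
lemma xi_nz: "\<xi> \<noteq> 0" using xin npos by (metis zero_neq_one zero_power)

lemma powi_mod: "\<xi> powi z = \<xi> powi (z mod int n)"
proof -
  have "z = z mod int n + int n * (z div int n)" by simp
  then have "\<xi> powi z = \<xi> powi (z mod int n) * (\<xi> powi int n) powi (z div int n)"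
    by (metis power_int_add power_int_mult xi_nz)
  then show ?thesis using xin by simp
qed

lemma powi_cong: "z mod int n = z' mod int n \<Longrightarrow> \<xi> powi z = \<xi> powi z'"
  by (metis powi_mod)

lemma powi_ne1: assumes "z mod int n \<noteq> 0" shows "\<xi> powi z \<noteq> 1"
proof -
  have "\<xi> powi z = \<xi> ^ nat (z mod int n)"
    using powi_mod[of z] npos by (simp add: power_int_def)
  moreover have "0 \<le> z mod int n" "z mod int n < int n" using npos by auto
  then have "0 < nat (z mod int n)" "nat (z mod int n) < n"
    using assms by linarith+
  ultimately show ?thesis using prim by auto
qed

lemma geo: "(\<Sum>x<n. (\<xi> powi z) ^ x) = (if z mod int n = 0 then of_nat n else 0)"
proof (cases "z mod int n = 0")
  case True
  then have "\<xi> powi z = 1" using powi_mod[of z] by simp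
  then show ?thesis using True by simp
next
  case False
  have "(\<xi> powi z) ^ n = \<xi> powi (z * int n)"
    by (metis power_int_mult power_int_of_nat)
  also have "\<dots> = 1" using powi_mod[of "z * int n"] by simp
  finally show ?thesis using False powi_ne1[OF False] by (simp add: sum_gp_strict)
qed

end

definition eunit :: "'a::field skew" where
  "eunit = (\<lambda>w m. if w = [] \<and> m = 0 then 1 else 0)"

lemma skmul_left:
  assumes "\<And>w' x. w' \<noteq> [] \<Longrightarrow> A w' x = 0"
  shows "skmul n \<xi> A X w c = (if c < n then (\<Sum>x<n. A [] x * \<xi> powi (int x * wt w) * X w ((c + n - x) mod n)) else 0)"
proof -
  have "(\<Sum>k\<le>length w. \<Sum>x<n. A (take k w) x * \<xi> powi (int x * wt (drop k w)) * X (drop k w) ((c + n - x) mod n))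
      = (\<Sum>k\<le>length w. if k = 0 then (\<Sum>x<n. A [] x * \<xi> powi (int x * wt w) * X w ((c + n - x) mod n)) else 0)"
  proof (intro sum.cong refl)
    fix k assume "k \<in> {..length w}"
    then have "k \<le> length w" by simp
    then show "(\<Sum>x<n. A (take k w) x * \<xi> powi (int x * wt (drop k w)) * X (drop k w) ((c + n - x) mod n))
      = (if k = 0 then (\<Sum>x<n. A [] x * \<xi> powi (int x * wt w) * X w ((c + n - x) mod n)) else 0)"
      by (cases w) (auto simp: assms)
  qed
  then show ?thesis by (simp add: skmul_def)
qed

lemma skmul_right:
  assumes "\<And>w' x. w' \<noteq> [] \<Longrightarrow> H w' x = 0"
  shows "skmul n \<xi> F H w c = (if c < n then (\<Sum>x<n. F w x * H [] ((c + n - x) mod n)) else 0)"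
proof -
  have "(\<Sum>k\<le>length w. \<Sum>x<n. F (take k w) x * \<xi> powi (int x * wt (drop k w)) * H (drop k w) ((c + n - x) mod n))
      = (\<Sum>k\<le>length w. if k = length w then (\<Sum>x<n. F w x * H [] ((c + n - x) mod n)) else 0)"
    by (intro sum.cong refl) (auto simp: assms wt_def)
  then show ?thesis by (simp add: skmul_def)
qed

context rou begin

lemma ftot_eq: "ftot n \<xi> = eunit"
proof (intro ext)
  fix w m
  have s: "(\<Sum>i<n. \<xi> ^ (i * m)) = (if m = 0 then of_nat n else 0)" if "m < n"
  proof -
    have "(\<Sum>i<n. \<xi> ^ (i * m)) = (\<Sum>i<n. (\<xi> powi int m) ^ i)"
      by (intro sum.cong refl) (metis power_int_of_nat power_mult mult.commute)
    also have "\<dots> = (if int m mod int n = 0 then of_nat n else 0)" by (rule geo)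
    finally show ?thesis using that by simp
  qed
  have "ftot n \<xi> w m = (\<Sum>i<n. fidem n \<xi> i w m)"
    unfolding ftot_def by (simp add: sum_app)
  also have "\<dots> = (if w = [] \<and> m < n then inverse (of_nat n) * (\<Sum>i<n. \<xi> ^ (i * m)) else 0)"
    by (auto simp: fidem_def sum_distrib_left)
  also have "\<dots> = eunit w m"
    using s npos by (auto simp: eunit_def)
  finally show "ftot n \<xi> w m = eunit w m" .
qed

lemma skmul_e_left:
  assumes "\<And>w m. m \<ge> n \<Longrightarrow> X w m = 0"
  shows "skmul n \<xi> eunit X = X"
proof (intro ext)
  fix w c
  have "skmul n \<xi> eunit X w c = (if c < n then (\<Sum>x<n. eunit [] x * \<xi> powi (int x * wt w) * X w ((c + n - x) mod n)) else 0)"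
    by (rule skmul_left) (simp add: eunit_def)
  also have "(\<Sum>x<n. eunit [] x * \<xi> powi (int x * wt w) * X w ((c + n - x) mod n)) = (\<Sum>x<n. if x = 0 then X w ((c + n - x) mod n) else 0)"
    by (intro sum.cong) (auto simp: eunit_def)
  also have "\<dots> = X w ((c + n) mod n)" using npos by (simp add: sum.delta)
  also have "(if c < n then X w ((c + n) mod n) else 0) = X w c" using assms[of c w] by auto
  finally show "skmul n \<xi> eunit X w c = X w c" .
qed

lemma modsub_eq0: "x < n \<Longrightarrow> c < n \<Longrightarrow> (c + n - x) mod n = 0 \<longleftrightarrow> x = c"
proof -
  assume a: "x < n" "c < n"
  show ?thesis
  proof (cases "x \<le> c")
    case True
    then have e: "c + n - x = (c - x) + n" by simp
    have "(c + n - x) mod n = (c - x) mod n" unfolding e by (rule mod_add_self2)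
    also have "(c - x) mod n = c - x" by (rule mod_less) (use a in linarith)
    finally have "(c + n - x) mod n = c - x" .
    then show ?thesis using a True by auto
  next
    case False
    then have "c + n - x < n" "c + n - x > 0" using a by auto
    then show ?thesis using False by simp
  qed
qed

lemma skmul_e_right:
  assumes "\<And>w m. m \<ge> n \<Longrightarrow> X w m = 0"
  shows "skmul n \<xi> X eunit = X"
proof (intro ext)
  fix w c
  have "skmul n \<xi> X eunit w c = (if c < n then (\<Sum>x<n. X w x * eunit [] ((c + n - x) mod n)) else 0)"
    by (rule skmul_right) (simp add: eunit_def)
  also have "\<dots> = (if c < n then (\<Sum>x<n. if x = c then X w x else 0) else 0)"
  proof -
    have t: "X w x * eunit [] ((c + n - x) mod n) = (if x = c then X w x else 0)" if "x < n" "c < n" for x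
      using modsub_eq0[OF that] by (simp add: eunit_def)
    show ?thesis by (cases "c < n") (simp_all add: t)
  qed
  also have "\<dots> = X w c" using assms[of c w] by auto
  finally show "skmul n \<xi> X eunit w c = X w c" .
qed

end

context rou begin

lemma modfix1: "x < n \<Longrightarrow> y < n \<Longrightarrow> ((y + n - x) mod n + x) mod n = y"
proof -
  assume a: "x < n" "y < n"
  have "((y + n - x) mod n + x) mod n = (y + n - x + x) mod n" by (simp add: mod_add_left_eq)
  also have "y + n - x + x = y + n" using a by simp
  finally show ?thesis using a by simp
qed

lemma modfix2: "x < n \<Longrightarrow> m < n \<Longrightarrow> ((m + x) mod n + n - x) mod n = m"
proof -
  assume a: "x < n" "m < n"
  show ?thesis
  proof (cases "m + x < n")
    case True
    then have "(m + x) mod n + n - x = m + n" by simp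
    then show ?thesis using a by simp
  next
    case False
    then have "(m + x) mod n = m + x - n" using a by (simp add: le_mod_geq)
    then have "(m + x) mod n + n - x = m" using False by simp
    then show ?thesis using a by simp
  qed
qed

lemma reidx: "x < n \<Longrightarrow> (\<Sum>y<n. F y ((y + n - x) mod n)) = (\<Sum>m<n. F ((m + x) mod n) m)"
  by (rule sum.reindex_bij_witness[where i="\<lambda>m. (m + x) mod n" and j="\<lambda>y. (y + n - x) mod n"])
     (auto simp: modfix1 modfix2)

lemma int_mod_nat: "int (a mod n) = int a - int n * int (a div n)"
  by (metis add_diff_cancel_left' div_mult_mod_eq mult.commute of_nat_add of_nat_mult)

lemma expo:
  assumes "x < n" "m < n" "c < n"
  shows "\<xi> ^ (i * x) * \<xi> powi (int x * t) * \<xi> ^ (j * ((c + n - (m + x) mod n) mod n))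
       = (\<xi> powi (int i + t - int j)) ^ x * \<xi> ^ (j * ((c + n - m) mod n))"
proof -
  have q: "(m + x) mod n < n" using npos by simp
  define d1 where "d1 = int ((c + n - (m + x) mod n) div n)"
  define d2 where "d2 = int ((m + x) div n)"
  define d3 where "d3 = int ((c + n - m) div n)"
  have e1: "int ((c + n - (m + x) mod n) mod n) = int c + int n - int ((m + x) mod n) - int n * d1"
    using int_mod_nat[of "c + n - (m + x) mod n"] q unfolding d1_def by (simp add: of_nat_diff)
  have e2: "int ((m + x) mod n) = int m + int x - int n * d2"
    using int_mod_nat[of "m + x"] unfolding d2_def by simp
  have e3: "int ((c + n - m) mod n) = int c + int n - int m - int n * d3"
    using int_mod_nat[of "c + n - m"] assms unfolding d3_def by (simp add: of_nat_diff)
  have pa: "\<And>a b. \<xi> powi (a + b) = \<xi> powi a * \<xi> powi b" using xi_nz by (simp add: power_int_add)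
  have pn: "\<And>a b. \<xi> ^ (a * b) = \<xi> powi (int a * int b)" by (metis power_int_of_nat of_nat_mult)
  have L: "\<xi> ^ (i * x) * \<xi> powi (int x * t) * \<xi> ^ (j * ((c + n - (m + x) mod n) mod n))
      = \<xi> powi (int i * int x + int x * t + int j * int ((c + n - (m + x) mod n) mod n))"
    unfolding pa pn ..
  have R: "(\<xi> powi (int i + t - int j)) ^ x * \<xi> ^ (j * ((c + n - m) mod n))
      = \<xi> powi ((int i + t - int j) * int x + int j * int ((c + n - m) mod n))"
    unfolding pa pn power_int_mult by simp
  have "(int i * int x + int x * t + int j * int ((c + n - (m + x) mod n) mod n))
      - ((int i + t - int j) * int x + int j * int ((c + n - m) mod n)) = int n * (int j * (d2 - d1 + d3))"
    unfolding e1 e2 e3 by (simp add: algebra_simps)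
  then have "(int i * int x + int x * t + int j * int ((c + n - (m + x) mod n) mod n)) mod int n
      = ((int i + t - int j) * int x + int j * int ((c + n - m) mod n)) mod int n"
    by (simp add: mod_eq_dvd_iff)
  then show ?thesis unfolding L R by (rule powi_cong)
qed

lemma Pcore:
  assumes "c < n"
  shows "(\<Sum>y<n. (\<Sum>x<n. (inverse (of_nat n) * \<xi> ^ (i * x)) * \<xi> powi (int x * t) * G ((y + n - x) mod n))
                 * (inverse (of_nat n) * \<xi> ^ (j * ((c + n - y) mod n))))
       = (if (int i + t - int j) mod int n = 0
          then inverse (of_nat n) * (\<Sum>m<n. \<xi> ^ (j * ((c + n - m) mod n)) * G m) else 0)"
proof -
  define a where "a x = inverse (of_nat n) * \<xi> ^ (i * x) * \<xi> powi (int x * t)" for x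
  define b where "b y = inverse (of_nat n) * \<xi> ^ (j * ((c + n - y) mod n))" for y
  define r where "r = \<xi> powi (int i + t - int j)"
  have "(\<Sum>y<n. (\<Sum>x<n. (inverse (of_nat n) * \<xi> ^ (i * x)) * \<xi> powi (int x * t) * G ((y + n - x) mod n))
                 * (inverse (of_nat n) * \<xi> ^ (j * ((c + n - y) mod n))))
      = (\<Sum>y<n. \<Sum>x<n. a x * b y * G ((y + n - x) mod n))"
    unfolding a_def b_def sum_distrib_right by (intro sum.cong refl) (simp add: algebra_simps)
  also have "\<dots> = (\<Sum>x<n. \<Sum>y<n. a x * b y * G ((y + n - x) mod n))"
    by (rule sum.swap)
  also have "\<dots> = (\<Sum>x<n. \<Sum>m<n. a x * b ((m + x) mod n) * G m)"
  proof (rule sum.cong[OF refl])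
    fix x assume "x \<in> {..<n}"
    then show "(\<Sum>y<n. a x * b y * G ((y + n - x) mod n)) = (\<Sum>m<n. a x * b ((m + x) mod n) * G m)"
      using reidx[of x "\<lambda>y z. a x * b y * G z"] by simp
  qed
  also have "\<dots> = (\<Sum>x<n. \<Sum>m<n. (inverse (of_nat n) * inverse (of_nat n)) * r ^ x * (\<xi> ^ (j * ((c + n - m) mod n)) * G m))"
  proof (intro sum.cong refl)
    fix x m assume "x \<in> {..<n}" "m \<in> {..<n}"
    then have "a x * b ((m + x) mod n) = inverse (of_nat n) * inverse (of_nat n) * (r ^ x * \<xi> ^ (j * ((c + n - m) mod n)))"
      using expo[of x m] assms unfolding a_def b_def r_def by (simp add: algebra_simps)
    then show "a x * b ((m + x) mod n) * G m = (inverse (of_nat n) * inverse (of_nat n)) * r ^ x * (\<xi> ^ (j * ((c + n - m) mod n)) * G m)"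
      by (simp add: algebra_simps)
  qed
  also have "\<dots> = (\<Sum>x<n. \<Sum>m<n. (inverse (of_nat n) * inverse (of_nat n)) * (r ^ x * (\<xi> ^ (j * ((c + n - m) mod n)) * G m)))"
    by (simp only: mult.assoc)
  also have "\<dots> = (inverse (of_nat n) * inverse (of_nat n)) * ((\<Sum>x<n. r ^ x) * (\<Sum>m<n. \<xi> ^ (j * ((c + n - m) mod n)) * G m))"
    by (rule sym, unfold sum_product, simp only: sum_distrib_left)
  also have "\<dots> = (if (int i + t - int j) mod int n = 0
          then inverse (of_nat n) * (\<Sum>m<n. \<xi> ^ (j * ((c + n - m) mod n)) * G m) else 0)"
    unfolding r_def geo using npos by simp
  finally show ?thesis .
qed


end


definition PP :: "nat \<Rightarrow> 'a::field \<Rightarrow> nat \<Rightarrow> nat \<Rightarrow> 'a skew \<Rightarrow> 'a skew" where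
 "PP n \<xi> i j X = (\<lambda>w c. if c < n \<and> (int i + wt w - int j) mod int n = 0
    then inverse (of_nat n) * (\<Sum>m<n. \<xi> ^ (j * ((c + n - m) mod n)) * X w m) else 0)"

context rou begin

lemma Pform:
  assumes "\<And>w m. m \<ge> n \<Longrightarrow> X w m = 0"
  shows "skmul n \<xi> (skmul n \<xi> (fidem n \<xi> i) (skmul n \<xi> (skmul n \<xi> (ftot n \<xi>) X) (ftot n \<xi>))) (fidem n \<xi> j)
     = PP n \<xi> i j X"
proof (intro ext)
  fix w c
  have e1: "skmul n \<xi> eunit X = X" by (rule skmul_e_left) (rule assms)
  have X': "skmul n \<xi> (skmul n \<xi> (ftot n \<xi>) X) (ftot n \<xi>) = X"
    unfolding ftot_eq e1 by (rule skmul_e_right) (rule assms)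
  have fs: "\<And>w' x. w' \<noteq> [] \<Longrightarrow> fidem n \<xi> k w' x = 0" for k by (simp add: fidem_def)
  have fe: "fidem n \<xi> k [] q = (if q < n then inverse (of_nat n) * \<xi> ^ (k * q) else 0)" for k q
    by (simp add: fidem_def)
  define Y where "Y = skmul n \<xi> (fidem n \<xi> i) X"
  have Y: "Y w y = (if y < n then (\<Sum>x<n. (inverse (of_nat n) * \<xi> ^ (i * x)) * \<xi> powi (int x * wt w) * X w ((y + n - x) mod n)) else 0)" for y
    unfolding Y_def
    apply (subst skmul_left[where A="fidem n \<xi> i"])
     apply (simp add: fidem_def)
    apply (simp add: fe)
    done
  have "skmul n \<xi> Y (fidem n \<xi> j) w c = (if c < n then (\<Sum>y<n. Y w y * fidem n \<xi> j [] ((c + n - y) mod n)) else 0)"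
    by (rule skmul_right[OF fs])
  also have "\<dots> = (if c < n then (\<Sum>y<n. (\<Sum>x<n. (inverse (of_nat n) * \<xi> ^ (i * x)) * \<xi> powi (int x * wt w) * X w ((y + n - x) mod n))
                 * (inverse (of_nat n) * \<xi> ^ (j * ((c + n - y) mod n)))) else 0)"
    using npos by (simp add: Y fe)
  also have "\<dots> = PP n \<xi> i j X w c"
    by (cases "c < n") (simp_all add: PP_def Pcore)
  finally have "skmul n \<xi> Y (fidem n \<xi> j) w c = PP n \<xi> i j X w c" .
  then show "skmul n \<xi> (skmul n \<xi> (fidem n \<xi> i) (skmul n \<xi> (skmul n \<xi> (ftot n \<xi>) X) (ftot n \<xi>))) (fidem n \<xi> j) w c
     = PP n \<xi> i j X w c" unfolding X' Y_def .
qed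

end


interpretation sv: vector_space "sscale :: 'a::field \<Rightarrow> 'a skew \<Rightarrow> 'a skew"
  by unfold_locales (auto simp: sscale_def algebra_simps fun_eq_iff)

definition Yv :: "nat \<Rightarrow> 'a::field \<Rightarrow> nat \<Rightarrow> bool list \<Rightarrow> 'a skew" where
  "Yv n \<xi> j v = (\<lambda>w c. if w = v \<and> c < n then \<xi> ^ (j * c) else 0)"

definition GoodW :: "nat \<Rightarrow> nat \<Rightarrow> nat \<Rightarrow> nat \<Rightarrow> bool list set" where
  "GoodW n k i j = {v. (\<exists>a b c. v = nw a b c) \<and> length v = k \<and> (int i + wt v - int j) mod int n = 0}"

definition Lf :: "bool list \<Rightarrow> 'a::field skew \<Rightarrow> 'a" where
  "Lf v X = Phi v (\<lambda>w. X w 0)"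

definition dl :: "bool list \<Rightarrow> nat \<Rightarrow> 'a::field skew" where
  "dl v m = (\<lambda>w c. if w = v \<and> c = m then 1 else 0)"

lemma wt_count: "wt w = 2 * int (count_list w True) - int (length w)"
  by (induction w) (auto simp: wt_def)

lemma Lf_add: "Lf v (X + Y) = Lf v X + Lf v Y"
proof -
  have "(\<lambda>w. (X + Y) w 0) = (\<lambda>w. X w 0) + (\<lambda>w. Y w 0)" by (simp add: fun_eq_iff)
  then show ?thesis unfolding Lf_def by (simp add: Phi_add)
qed

lemma Lf_scale: "Lf v (sscale c X) = c * Lf v X"
proof -
  have "(\<lambda>w. sscale c X w 0) = fscale c (\<lambda>w. X w 0)" by (simp add: fun_eq_iff sscale_def fscale_def)
  then show ?thesis unfolding Lf_def by (simp add: Phi_scale)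
qed

lemma Lf_zero: "Lf v 0 = 0"
proof -
  have "(\<lambda>w. (0 :: 'a::field skew) w 0) = 0" by (simp add: fun_eq_iff)
  then show ?thesis unfolding Lf_def by (simp add: Phi_zero)
qed

lemma Lf_span:
  assumes "X \<in> sv.span S" "\<And>Y. Y \<in> S \<Longrightarrow> Lf v Y = 0"
  shows "Lf v X = (0 :: 'a::field)"
  using assms(1)
proof (induction rule: sv.span_induct_alt)
  case base then show ?case by (rule Lf_zero)
next
  case (step c x y)
  then show ?case by (simp only: Lf_add Lf_scale assms(2)[OF step(1)] step(2)) simp
qed

lemma Lf_J: "0 < n \<Longrightarrow> X \<in> idealdeg n k \<Longrightarrow> Lf v X = 0"
  unfolding Lf_def idealdeg_def by (auto intro: Phi_ideal)

lemma idealdeg_subspace: "sv.subspace (idealdeg n k :: 'a::field skew set)"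
  unfolding sv.subspace_def
proof (intro conjI ballI allI)
  show "0 \<in> (idealdeg n k :: 'a skew set)"
    unfolding idealdeg_def skdeg_def relIdeal_def
    using fv.span_zero by (auto simp: zero_fun_def[symmetric])
next
  fix X Y :: "'a skew" assume X: "X \<in> idealdeg n k" and Y: "Y \<in> idealdeg n k"
  show "X + Y \<in> idealdeg n k"
    unfolding idealdeg_def skdeg_def
  proof (intro CollectI conjI allI impI)
    fix w :: "bool list" and m :: nat assume "n \<le> m \<or> length w \<noteq> k"
    then show "(X + Y) w m = 0" using X Y by (auto simp: idealdeg_def skdeg_def)
  next
    fix m assume m: "m < n"
    have "(\<lambda>w. (X + Y) w m) = (\<lambda>w. X w m) + (\<lambda>w. Y w m)" by (simp add: fun_eq_iff)
    moreover have "(\<lambda>w. X w m) \<in> relIdeal" "(\<lambda>w. Y w m) \<in> relIdeal"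
      using X Y m by (auto simp: idealdeg_def)
    ultimately show "(\<lambda>w. (X + Y) w m) \<in> relIdeal"
      unfolding relIdeal_def by (simp add: fv.span_add)
  qed
next
  fix c :: 'a and X :: "'a skew" assume X: "X \<in> idealdeg n k"
  show "sscale c X \<in> idealdeg n k"
    unfolding idealdeg_def skdeg_def
  proof (intro CollectI conjI allI impI)
    fix w :: "bool list" and m :: nat assume "n \<le> m \<or> length w \<noteq> k"
    then show "sscale c X w m = 0" using X by (auto simp: idealdeg_def skdeg_def sscale_def)
  next
    fix m assume m: "m < n"
    have "(\<lambda>w. sscale c X w m) = fscale c (\<lambda>w. X w m)" by (simp add: fun_eq_iff sscale_def fscale_def)
    moreover have "(\<lambda>w. X w m) \<in> relIdeal" using X m by (auto simp: idealdeg_def)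
    ultimately show "(\<lambda>w. sscale c X w m) \<in> relIdeal"
      unfolding relIdeal_def by (simp add: fv.span_scale)
  qed
qed

lemma skdeg_span: "X \<in> skdeg n k \<Longrightarrow> X \<in> sv.span ((\<lambda>(v, m). dl v m) ` ({v. length v = k} \<times> {..<n}))"
proof -
  assume X: "X \<in> skdeg n k"
  let ?A = "{v::bool list. length v = k} \<times> {..<n}"
  have fA: "finite ?A" using finite_len[of k] by (intro finite_cartesian_product) auto
  have "X = (\<Sum>p\<in>?A. sscale (X (fst p) (snd p)) (dl (fst p) (snd p)))"
  proof (intro ext)
    fix w c
    have "(\<Sum>p\<in>?A. sscale (X (fst p) (snd p)) (dl (fst p) (snd p))) w c
        = (\<Sum>p\<in>?A. if p = (w, c) then X w c else 0)"
      unfolding sum_app by (intro sum.cong refl) (auto simp: sscale_def dl_def)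
    also have "\<dots> = X w c"
      using X fA by (auto simp: sum.delta skdeg_def)
    finally show "X w c = (\<Sum>p\<in>?A. sscale (X (fst p) (snd p)) (dl (fst p) (snd p))) w c" by simp
  qed
  also have "\<dots> \<in> sv.span ((\<lambda>(v, m). dl v m) ` ?A)"
    by (intro sv.span_sum sv.span_scale sv.span_base) (force simp: image_iff)
  finally show ?thesis .
qed

lemma sgnw_nz: "sgnw v \<noteq> (0 :: 'a::field)"
  by (simp add: sgnw_def)


context rou begin

lemma expo2:
  assumes "m < n" "c < n"
  shows "\<xi> ^ (j * ((c + n - m) mod n)) = \<xi> ^ (j * c) * \<xi> ^ (j * ((n - m) mod n))"
proof -
  have pa: "\<And>a b. \<xi> powi (a + b) = \<xi> powi a * \<xi> powi b" using xi_nz by (simp add: power_int_add)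
  have pn: "\<And>a b. \<xi> ^ (a * b) = \<xi> powi (int a * int b)" by (metis power_int_of_nat of_nat_mult)
  define d1 where "d1 = int ((c + n - m) div n)"
  define d2 where "d2 = int ((n - m) div n)"
  have e1: "int ((c + n - m) mod n) = int c + int n - int m - int n * d1"
    using int_mod_nat[of "c + n - m"] assms unfolding d1_def by (simp add: of_nat_diff)
  have e2: "int ((n - m) mod n) = int n - int m - int n * d2"
    using int_mod_nat[of "n - m"] assms unfolding d2_def by (simp add: of_nat_diff)
  have "int j * int ((c + n - m) mod n) - (int j * int c + int j * int ((n - m) mod n)) = int n * (int j * (d2 - d1))"
    unfolding e1 e2 by (simp add: algebra_simps)
  then have "(int j * int ((c + n - m) mod n)) mod int n = (int j * int c + int j * int ((n - m) mod n)) mod int n"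
    by (simp add: mod_eq_dvd_iff)
  then have "\<xi> powi (int j * int ((c + n - m) mod n)) = \<xi> powi (int j * int c + int j * int ((n - m) mod n))"
    by (rule powi_cong)
  then show ?thesis unfolding pa pn .
qed

lemma Lf_Yv: "Lf v (Yv n \<xi> j v') = Phi v (fmono v')"
proof -
  have "(\<lambda>w. Yv n \<xi> j v' w 0) = fmono v'" using npos by (simp add: fun_eq_iff Yv_def fmono_def)
  then show ?thesis by (simp add: Lf_def)
qed

lemma Phi_good:
  assumes "v \<in> GoodW n k i j" "v' \<in> GoodW n k i j"
  shows "Phi v (fmono v') = (if v' = v then sgnw v else (0::'a))"
proof -
  obtain a b c a' b' c' where v: "v = nw a b c" and v': "v' = nw a' b' c'"
    using assms by (auto simp: GoodW_def)
  have "length v' = length v" using assms by (simp add: GoodW_def)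
  moreover have "wkey v' = wkey v \<Longrightarrow> v' = v"
    using wkey_nw_inj[of a' b' c' a b c] v v' by auto
  ultimately show ?thesis by (auto simp: Phi_fmono)
qed

lemma Yv_in_C:
  assumes "v \<in> GoodW n k i j"
  shows "Yv n \<xi> j v \<in> cornerRep n \<xi> k i j"
proof -
  define Xv where "Xv = (\<lambda>(w::bool list) (m::nat). if w = v \<and> m = 0 then (of_nat n :: 'a) else 0)"
  have Xs: "Xv \<in> skdeg n k" using assms npos by (auto simp: Xv_def skdeg_def GoodW_def)
  have cond: "(int i + wt v - int j) mod int n = 0" using assms by (simp add: GoodW_def)
  have nz: "(of_nat n :: 'a) \<noteq> 0" using npos by simp
  have PPX: "PP n \<xi> i j Xv = Yv n \<xi> j v"
  proof (intro ext)
    fix w c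
    have s: "(\<Sum>m<n. \<xi> ^ (j * ((c + n - m) mod n)) * Xv w m) = (if w = v then \<xi> ^ (j * ((c + n) mod n)) * of_nat n else 0)"
    proof -
      have "(\<Sum>m<n. \<xi> ^ (j * ((c + n - m) mod n)) * Xv w m) = (\<Sum>m<n. if m = 0 then (if w = v then \<xi> ^ (j * ((c + n - m) mod n)) * of_nat n else 0) else 0)"
        by (intro sum.cong refl) (auto simp: Xv_def)
      also have "\<dots> = (if w = v then \<xi> ^ (j * ((c + n) mod n)) * of_nat n else 0)"
        using npos by (simp add: sum.delta)
      finally show ?thesis .
    qed
    show "PP n \<xi> i j Xv w c = Yv n \<xi> j v w c"
      unfolding PP_def Yv_def s using cond nz by auto
  qed
  have hz: "\<And>w m. m \<ge> n \<Longrightarrow> Xv w m = 0" using npos by (auto simp: Xv_def)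
  have "skmul n \<xi> (skmul n \<xi> (fidem n \<xi> i) (skmul n \<xi> (skmul n \<xi> (ftot n \<xi>) Xv) (ftot n \<xi>))) (fidem n \<xi> j)
     = Yv n \<xi> j v" (is "?lhs = _") by (rule trans[OF Pform[OF hz] PPX])
  then show ?thesis unfolding cornerRep_def
    by (intro CollectI exI[of _ Xv] conjI) (simp_all add: Xs)
qed

end


context rou begin

lemma C_eq: "cornerRep n \<xi> k i j = PP n \<xi> i j ` skdeg n k"
proof -
  have "\<And>X. X \<in> skdeg n k \<Longrightarrow> skmul n \<xi> (skmul n \<xi> (fidem n \<xi> i) (skmul n \<xi> (skmul n \<xi> (ftot n \<xi>) X) (ftot n \<xi>))) (fidem n \<xi> j)
     = PP n \<xi> i j X"
    by (rule Pform) (simp add: skdeg_def)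
  note h = this
  show ?thesis
  proof (rule equalityI; rule subsetI)
    fix Z assume "Z \<in> cornerRep n \<xi> k i j"
    then obtain X where "Z = skmul n \<xi> (skmul n \<xi> (fidem n \<xi> i) (skmul n \<xi> (skmul n \<xi> (ftot n \<xi>) X) (ftot n \<xi>))) (fidem n \<xi> j)"
      "X \<in> skdeg n k" by (auto simp: cornerRep_def)
    then show "Z \<in> PP n \<xi> i j ` skdeg n k" using h by auto
  next
    fix Z assume "Z \<in> PP n \<xi> i j ` skdeg n k"
    then obtain X where "Z = PP n \<xi> i j X" "X \<in> skdeg n k" by auto
    then have "Z = skmul n \<xi> (skmul n \<xi> (fidem n \<xi> i) (skmul n \<xi> (skmul n \<xi> (ftot n \<xi>) X) (ftot n \<xi>))) (fidem n \<xi> j)"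
      "X \<in> skdeg n k" using h[of X] by simp_all
    then show "Z \<in> cornerRep n \<xi> k i j" unfolding cornerRep_def
      by (intro CollectI exI[of _ X] conjI)
  qed
qed

lemma hdim_eq: "hdim n \<xi> k i j = card (GoodW n k i j)"
proof -
  let ?C = "cornerRep n \<xi> k i j" and ?J = "idealdeg n k :: 'a skew set" and ?G = "GoodW n k i j"
  define Y where "Y = Yv n \<xi> j"
  define Dset where "Dset = (\<lambda>(v, m). dl v m :: 'a skew) ` ({v. length v = k} \<times> {..<n})"
  obtain BJ where BJ: "BJ \<subseteq> ?J" "sv.independent BJ" "?J \<subseteq> sv.span BJ" "card BJ = sv.dim ?J"
    using sv.basis_exists[of ?J] by blast
  have finD: "finite Dset" using finite_len by (simp add: Dset_def)
  have "BJ \<subseteq> sv.span Dset" using BJ(1) skdeg_span unfolding Dset_def idealdeg_def by blast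
  then have finBJ: "finite BJ" using sv.independent_span_bound[OF finD BJ(2)] by blast
  have finG: "finite ?G" by (rule finite_subset[OF _ finite_len[of k]]) (auto simp: GoodW_def)
  have LJ: "\<And>v X. X \<in> ?J \<Longrightarrow> Lf v X = 0" using Lf_J npos by blast
  have LY: "\<And>v v'. v \<in> ?G \<Longrightarrow> v' \<in> ?G \<Longrightarrow> Lf v (Y v') = (if v' = v then sgnw v else 0)"
    unfolding Y_def Lf_Yv by (rule Phi_good)
  have notin: "Y v \<notin> sv.span (BJ \<union> Y ` H)" if a: "v \<in> ?G" "H \<subseteq> ?G" "v \<notin> H" for v H
  proof
    assume a4: "Y v \<in> sv.span (BJ \<union> Y ` H)"
    have "Lf v (Y v) = 0"
    proof (rule Lf_span[OF a4])
      fix Z assume "Z \<in> BJ \<union> Y ` H"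
      then show "Lf v Z = 0"
      proof
        assume "Z \<in> BJ" then show ?thesis using BJ(1) LJ by blast
      next
        assume "Z \<in> Y ` H"
        then obtain v' where "v' \<in> H" "Z = Y v'" by blast
        then show ?thesis using LY[of v v'] a by auto
      qed
    qed
    then show False using LY[OF a(1) a(1)] sgnw_nz[of v, where 'a='a] by simp
  qed
  have indep0: "finite H \<Longrightarrow> H \<subseteq> ?G \<Longrightarrow> sv.independent (BJ \<union> Y ` H)" for H
  proof (induction H rule: finite_induct)
    case empty then show ?case using BJ(2) by simp
  next
    case (insert x F)
    have e: "BJ \<union> Y ` insert x F = insert (Y x) (BJ \<union> Y ` F)" by auto
    show ?case unfolding e
      by (rule sv.independent_insertI) (use notin[of x F] insert in auto)
  qed
  have indep: "sv.independent (BJ \<union> Y ` ?G)" using indep0[OF finG] by simp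
  have disj: "BJ \<inter> Y ` ?G = {}"
  proof (rule ccontr)
    assume "BJ \<inter> Y ` ?G \<noteq> {}"
    then obtain v where "v \<in> ?G" "Y v \<in> BJ" by blast
    then show False using LJ[of "Y v" v] BJ(1) LY[of v v] sgnw_nz[of v, where 'a='a] by auto
  qed
  have inj: "inj_on Y ?G"
  proof (rule inj_onI)
    fix v v' assume a: "v \<in> ?G" "v' \<in> ?G" "Y v = Y v'"
    then have e: "Lf v (Y v) = Lf v (Y v')" by simp
    show "v = v'"
    proof (rule ccontr)
      assume "v \<noteq> v'"
      then have "Lf v (Y v') = 0" using LY[OF a(1) a(2)] by simp
      moreover have "Lf v (Y v) = sgnw v" using LY[OF a(1) a(1)] by simp
      ultimately show False using e sgnw_nz[of v, where 'a='a] by simp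
    qed
  qed
  have Yw_span: "Y w \<in> sv.span (BJ \<union> Y ` ?G)"
    if w: "length w = k" "(int i + wt w - int j) mod int n = 0" for w
  proof -
    obtain a b c s where r: "length (nw a b c) = length w" "count_list (nw a b c) True = count_list w True"
      "s = 1 \<or> s = -1" "fmono w - fscale s (fmono (nw a b c)) \<in> (relIdeal :: 'a free set)"
      using reduce[of w, where 'a='a] by blast
    define v0 where "v0 = nw a b c"
    have v0G: "v0 \<in> ?G" using r w unfolding GoodW_def v0_def by (auto simp: wt_count)
    define D where "D = Y w - sscale s (Y v0)"
    have DJ: "D \<in> ?J"
      unfolding idealdeg_def skdeg_def
    proof (intro CollectI conjI allI impI)
      fix w' :: "bool list" and m :: nat assume "n \<le> m \<or> length w' \<noteq> k"
      then show "D w' m = 0" using r w by (auto simp: D_def Y_def Yv_def sscale_def v0_def)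
    next
      fix m assume m: "m < n"
      have "(\<lambda>w'. D w' m) = fscale (\<xi> ^ (j * m)) (fmono w - fscale s (fmono v0))"
        using m by (auto simp: fun_eq_iff D_def Y_def Yv_def sscale_def fscale_def fmono_def algebra_simps)
      then show "(\<lambda>w'. D w' m) \<in> relIdeal"
        using r(4) unfolding relIdeal_def v0_def by (simp add: fv.span_scale)
    qed
    have "Y w = D + sscale s (Y v0)" by (simp add: D_def fun_eq_iff sscale_def)
    also have "\<dots> \<in> sv.span (BJ \<union> Y ` ?G)"
    proof (rule sv.span_add)
      show "D \<in> sv.span (BJ \<union> Y ` ?G)" using DJ BJ(3) sv.span_mono[of BJ "BJ \<union> Y ` ?G"] by blast
      show "sscale s (Y v0) \<in> sv.span (BJ \<union> Y ` ?G)"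
        by (rule sv.span_scale, rule sv.span_base) (use v0G in blast)
    qed
    finally show ?thesis .
  qed
  have PPspan: "PP n \<xi> i j X \<in> sv.span (BJ \<union> Y ` ?G)" if X: "X \<in> skdeg n k" for X
  proof -
    define Wg where "Wg = {w. length w = k \<and> (int i + wt w - int j) mod int n = 0}"
    define \<alpha> where "\<alpha> w = inverse (of_nat n) * (\<Sum>m<n. \<xi> ^ (j * ((n - m) mod n)) * X w m)" for w
    have finWg: "finite Wg" by (rule finite_subset[OF _ finite_len[of k]]) (auto simp: Wg_def)
    have "PP n \<xi> i j X = (\<Sum>w\<in>Wg. sscale (\<alpha> w) (Y w))"
    proof (intro ext)
      fix w' c
      have "(\<Sum>w\<in>Wg. sscale (\<alpha> w) (Y w)) w' c = (\<Sum>w\<in>Wg. if w = w' then (if c < n then \<alpha> w' * \<xi> ^ (j * c) else 0) else 0)"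
        unfolding sum_app by (intro sum.cong refl) (auto simp: sscale_def Y_def Yv_def)
      also have "\<dots> = (if w' \<in> Wg \<and> c < n then \<alpha> w' * \<xi> ^ (j * c) else 0)" using finWg by (simp add: sum.delta)
      also have "\<dots> = PP n \<xi> i j X w' c"
      proof (cases "c < n \<and> (int i + wt w' - int j) mod int n = 0")
        case True
        show ?thesis
        proof (cases "length w' = k")
          case True2: True
          have "(\<Sum>m<n. \<xi> ^ (j * ((c + n - m) mod n)) * X w' m) = \<xi> ^ (j * c) * (\<Sum>m<n. \<xi> ^ (j * ((n - m) mod n)) * X w' m)"
            unfolding sum_distrib_left using True by (intro sum.cong refl) (simp add: expo2)
          then show ?thesis using True True2 by (simp add: PP_def \<alpha>_def Wg_def algebra_simps)
        next
          case False
          then have "\<And>m. X w' m = 0" using X by (simp add: skdeg_def)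
          then show ?thesis using False by (simp add: PP_def Wg_def)
        qed
      next
        case False then show ?thesis by (auto simp: PP_def Wg_def)
      qed
      finally show "PP n \<xi> i j X w' c = (\<Sum>w\<in>Wg. sscale (\<alpha> w) (Y w)) w' c" by simp
    qed
    also have "\<dots> \<in> sv.span (BJ \<union> Y ` ?G)"
      by (intro sv.span_sum sv.span_scale Yw_span) (auto simp: Wg_def)
    finally show ?thesis .
  qed
  have CJ: "sv.span (?C \<union> ?J) = sv.span (BJ \<union> Y ` ?G)"
  proof
    show "sv.span (?C \<union> ?J) \<subseteq> sv.span (BJ \<union> Y ` ?G)"
    proof (rule sv.span_minimal)
      show "?C \<union> ?J \<subseteq> sv.span (BJ \<union> Y ` ?G)"
        using C_eq PPspan BJ(3) sv.span_mono[of BJ "BJ \<union> Y ` ?G"] by auto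
      show "sv.subspace (sv.span (BJ \<union> Y ` ?G))" by (rule sv.subspace_span)
    qed
    show "sv.span (BJ \<union> Y ` ?G) \<subseteq> sv.span (?C \<union> ?J)"
      by (rule sv.span_mono) (use BJ(1) Yv_in_C in \<open>auto simp: Y_def\<close>)
  qed
  have "sv.dim (?C \<union> ?J) = card (BJ \<union> Y ` ?G)"
    using sv.dim_span[of "?C \<union> ?J"] CJ sv.dim_span_eq_card_independent[OF indep] by simp
  also have "\<dots> = card BJ + card ?G"
    using card_Un_disjoint[OF finBJ _ disj] finG card_image[OF inj] by simp
  finally show ?thesis unfolding hdim_def using BJ(4) by simp
qed

end


definition Ts :: "nat \<Rightarrow> nat \<Rightarrow> int \<Rightarrow> (nat \<times> nat \<times> nat) set" where
  "Ts n k r = {(a, b, c). a + 2 * b + c = k \<and> (int a - int c - r) mod int n = 0}"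
definition Gs :: "nat \<Rightarrow> nat \<Rightarrow> int \<Rightarrow> (nat \<times> nat) set" where
  "Gs n k r = {(a, c). a + c = k \<and> (int a - int c - r) mod int n = 0}"
definition ecnt :: "nat \<Rightarrow> nat \<Rightarrow> int \<Rightarrow> nat" where
  "ecnt n k r = (if (- int k - r) mod int n = 0 then 1 else 0)"

lemma Ts_fin: "finite (Ts n k r)"
  by (rule finite_subset[of _ "{..k} \<times> {..k} \<times> {..k}"]) (auto simp: Ts_def)
lemma Gs_fin: "finite (Gs n k r)"
  by (rule finite_subset[of _ "{..k} \<times> {..k}"]) (auto simp: Gs_def)

lemma Ts_split: "Ts n k r = (\<lambda>(a, c). (a, 0, c)) ` Gs n k r \<union>
   (if k \<ge> 2 then (\<lambda>(a, b, c). (a, Suc b, c)) ` Ts n (k - 2) r else {})"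
proof (rule equalityI; rule subsetI)
  fix t assume "t \<in> Ts n k r"
  then obtain a b c where t: "t = (a, b, c)" "a + 2 * b + c = k" "(int a - int c - r) mod int n = 0"
    by (auto simp: Ts_def)
  show "t \<in> (\<lambda>(a, c). (a, 0, c)) ` Gs n k r \<union>
   (if k \<ge> 2 then (\<lambda>(a, b, c). (a, Suc b, c)) ` Ts n (k - 2) r else {})"
  proof (cases b)
    case 0
    then have "(a, c) \<in> Gs n k r" using t by (simp add: Gs_def)
    then have "t \<in> (\<lambda>(a, c). (a, 0, c)) ` Gs n k r" using t 0 by (auto intro!: image_eqI[of _ _ "(a, c)"])
    then show ?thesis by blast
  next
    case (Suc b')
    then have k2: "k \<ge> 2" and "(a, b', c) \<in> Ts n (k - 2) r" using t by (auto simp: Ts_def)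
    then have "t \<in> (\<lambda>(a, b, c). (a, Suc b, c)) ` Ts n (k - 2) r" using t Suc by (auto intro!: image_eqI[of _ _ "(a, b', c)"])
    then show ?thesis using k2 by simp
  qed
next
  fix t assume "t \<in> (\<lambda>(a, c). (a, 0, c)) ` Gs n k r \<union>
   (if k \<ge> 2 then (\<lambda>(a, b, c). (a, Suc b, c)) ` Ts n (k - 2) r else {})"
  then show "t \<in> Ts n k r"
    by (auto simp: Ts_def Gs_def split: if_splits)
qed

lemma card_Ts: "card (Ts n k r) = card (Gs n k r) + (if k \<ge> 2 then card (Ts n (k - 2) r) else 0)"
proof -
  have i1: "inj_on (\<lambda>(a, c). (a, 0::nat, c)) (Gs n k r)" by (auto simp: inj_on_def)
  have i2: "inj_on (\<lambda>(a, b, c). (a, Suc b, c)) (Ts n (k - 2) r)" by (auto simp: inj_on_def)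
  have d: "(\<lambda>(a, c). (a, 0::nat, c)) ` Gs n k r \<inter> (\<lambda>(a, b, c). (a, Suc b, c)) ` Ts n (k - 2) r = {}"
    by auto
  have eq: "Ts n k r = (\<lambda>(a, c). (a, 0, c)) ` Gs n k r \<union>
   (if k \<ge> 2 then (\<lambda>(a, b, c). (a, Suc b, c)) ` Ts n (k - 2) r else {})" by (rule Ts_split)
  show ?thesis
    unfolding eq
    using card_Un_disjoint[OF finite_imageI[OF Gs_fin] finite_imageI[OF Ts_fin] d]
      card_image[OF i1] card_image[OF i2]
    by auto
qed

lemma Gs_split: "Gs n k r = (if (- int k - r) mod int n = 0 then {(0, k)} else {}) \<union>
   (if k \<ge> 1 then (\<lambda>(a, c). (Suc a, c)) ` Gs n (k - 1) (r - 1) else {})"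
proof (rule equalityI; rule subsetI)
  fix t assume "t \<in> Gs n k r"
  then obtain a c where t: "t = (a, c)" "a + c = k" "(int a - int c - r) mod int n = 0"
    by (auto simp: Gs_def)
  show "t \<in> (if (- int k - r) mod int n = 0 then {(0, k)} else {}) \<union>
   (if k \<ge> 1 then (\<lambda>(a, c). (Suc a, c)) ` Gs n (k - 1) (r - 1) else {})"
  proof (cases a)
    case 0
    then show ?thesis using t by auto
  next
    case (Suc a')
    then have k1: "k \<ge> 1" and "(a', c) \<in> Gs n (k - 1) (r - 1)" using t by (auto simp: Gs_def algebra_simps)
    then have "t \<in> (\<lambda>(a, c). (Suc a, c)) ` Gs n (k - 1) (r - 1)" using t Suc by (auto intro!: image_eqI[of _ _ "(a', c)"])
    then show ?thesis using k1 by simp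
  qed
next
  fix t assume a: "t \<in> (if (- int k - r) mod int n = 0 then {(0, k)} else {}) \<union>
   (if k \<ge> 1 then (\<lambda>(a, c). (Suc a, c)) ` Gs n (k - 1) (r - 1) else {})"
  have sw: "- int k - r = - r - int k" by arith
  show "t \<in> Gs n k r"
    using a sw by (auto simp: Gs_def algebra_simps simp flip: dvd_eq_mod_eq_0 split: if_splits)
qed

lemma card_Gs: "card (Gs n k r) = ecnt n k r + (if k \<ge> 1 then card (Gs n (k - 1) (r - 1)) else 0)"
proof -
  have i1: "inj_on (\<lambda>(a, c). (Suc a, c)) (Gs n (k - 1) (r - 1))" by (auto simp: inj_on_def)
  have d: "(if (- int k - r) mod int n = 0 then {(0::nat, k)} else {}) \<inter> (\<lambda>(a, c). (Suc a, c)) ` Gs n (k - 1) (r - 1) = {}"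
    by auto
  have eq: "Gs n k r = (if (- int k - r) mod int n = 0 then {(0, k)} else {}) \<union>
   (if k \<ge> 1 then (\<lambda>(a, c). (Suc a, c)) ` Gs n (k - 1) (r - 1) else {})" by (rule Gs_split)
  show ?thesis
    unfolding eq
    using card_Un_disjoint[OF _ finite_imageI[OF Gs_fin] d] card_image[OF i1]
    by (auto simp: ecnt_def)
qed

lemma ecnt_rec: "ecnt n k r = (if k = 0 \<and> r mod int n = 0 then 1 else 0) + (if k \<ge> 1 then ecnt n (k - 1) (r + 1) else 0)"
proof (cases k)
  case 0
  then show ?thesis by (auto simp: ecnt_def simp flip: dvd_eq_mod_eq_0)
next
  case (Suc k')
  have e: "- int (Suc k') - r = - int k' - (r + 1)" by simp
  show ?thesis unfolding ecnt_def Suc by (simp only: e) simp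
qed

definition Nf :: "nat \<Rightarrow> int \<Rightarrow> int fps" where "Nf n r = Abs_fps (\<lambda>k. int (card (Ts n k r)))"
definition Gf :: "nat \<Rightarrow> int \<Rightarrow> int fps" where "Gf n r = Abs_fps (\<lambda>k. int (card (Gs n k r)))"
definition Ef :: "nat \<Rightarrow> int \<Rightarrow> int fps" where "Ef n r = Abs_fps (\<lambda>k. int (ecnt n k r))"
definition dlt :: "nat \<Rightarrow> int \<Rightarrow> int fps" where "dlt n r = (if r mod int n = 0 then 1 else 0)"

lemma Nf_rec: "Nf n r = Gf n r + fps_X ^ 2 * Nf n r"
proof (rule fps_ext)
  fix k show "fps_nth (Nf n r) k = fps_nth (Gf n r + fps_X ^ 2 * Nf n r) k"
    using card_Ts[of n k r] by (auto simp: Nf_def Gf_def fps_X_power_mult_nth)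
qed

lemma Gf_rec: "Gf n r = Ef n r + fps_X * Gf n (r - 1)"
proof (rule fps_ext)
  fix k show "fps_nth (Gf n r) k = fps_nth (Ef n r + fps_X * Gf n (r - 1)) k"
    using card_Gs[of n k r] by (auto simp: Gf_def Ef_def)
qed

lemma Ef_rec: "Ef n r = dlt n r + fps_X * Ef n (r + 1)"
proof (rule fps_ext)
  fix k show "fps_nth (Ef n r) k = fps_nth (dlt n r + fps_X * Ef n (r + 1)) k"
    using ecnt_rec[of n k r] by (cases "r mod int n = 0") (auto simp: Ef_def dlt_def)
qed

lemma ident: "(1 - fps_X ^ 2) * ((1 + fps_X ^ 2) * Nf n r - fps_X * (Nf n (r - 1) + Nf n (r + 1))) = dlt n r"
proof -
  have h1: "(1 - fps_X ^ 2) * Nf n r' = Gf n r'" for r'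
    using Nf_rec[of n r'] by (simp add: algebra_simps)
  have e1: "Gf n r = Ef n r + fps_X * Gf n (r - 1)" by (rule Gf_rec)
  have e2: "Gf n (r + 1) = Ef n (r + 1) + fps_X * Gf n r" using Gf_rec[of n "r + 1"] by simp
  have e3: "Ef n r = dlt n r + fps_X * Ef n (r + 1)" by (rule Ef_rec)
  have "(1 - fps_X ^ 2) * ((1 + fps_X ^ 2) * Nf n r - fps_X * (Nf n (r - 1) + Nf n (r + 1)))
     = (1 + fps_X ^ 2) * ((1 - fps_X ^ 2) * Nf n r) - fps_X * ((1 - fps_X ^ 2) * Nf n (r - 1) + (1 - fps_X ^ 2) * Nf n (r + 1))"
    by (simp add: algebra_simps)
  also have "\<dots> = (1 + fps_X ^ 2) * Gf n r - fps_X * (Gf n (r - 1) + Gf n (r + 1))"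
    by (simp only: h1)
  also have "\<dots> = (1 + fps_X ^ 2) * Gf n r - fps_X * (Gf n (r - 1) + (Ef n (r + 1) + fps_X * Gf n r))"
    by (simp only: e2)
  also have "\<dots> = Gf n r - fps_X * Gf n (r - 1) - fps_X * Ef n (r + 1)"
    by (simp add: algebra_simps power2_eq_square)
  also have "\<dots> = Ef n r - fps_X * Ef n (r + 1)"
    by (subst e1) simp
  also have "\<dots> = dlt n r"
    by (subst e3) simp
  finally show ?thesis .
qed

lemma Ts_mod: assumes "r mod int n = r' mod int n" shows "Ts n k r = Ts n k r'"
proof -
  have "\<And>x. (x - r) mod int n = (x - r') mod int n" using assms by (metis mod_diff_right_eq)
  then show ?thesis by (simp add: Ts_def)
qed

lemma Nf_mod: "r mod int n = r' mod int n \<Longrightarrow> Nf n r = Nf n r'"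
  unfolding Nf_def using Ts_mod by metis

lemma shift_sum:
  assumes "n > 0"
  shows "(\<Sum>j<n. Nf n (int j + c)) = (\<Sum>j<n. Nf n (int j))"
proof -
  define S where "S c = (\<Sum>j<n. Nf n (int j + c))" for c
  have step: "S (c + 1) = S c" for c
  proof -
    obtain m where m: "n = Suc m" using assms by (cases n) auto
    have "S (c + 1) = (\<Sum>j<n. Nf n (int (Suc j) + c))" unfolding S_def by (intro sum.cong) (auto simp: algebra_simps)
    also have "\<dots> = (\<Sum>j<Suc n. Nf n (int j + c)) - Nf n c"
      by (subst sum.lessThan_Suc_shift) simp
    also have "\<dots> = S c + Nf n (int n + c) - Nf n c" unfolding S_def by simp
    also have "Nf n (int n + c) = Nf n c" by (rule Nf_mod) simp
    finally show ?thesis by simp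
  qed
  have "S c = S 0"
  proof (induction c rule: int_induct[where k=0])
    case base then show ?case by simp
  next
    case (step1 i) then show ?case using step[of i] by simp
  next
    case (step2 i) then show ?case using step[of "i - 1"] by simp
  qed
  then show ?thesis unfolding S_def by simp
qed


context rou begin

lemma card_GoodW: "card (GoodW n k i j) = card (Ts n k (int j - int i))"
proof -
  let ?f = "\<lambda>(a, b, c). nw a b c"
  have wtn: "wt (nw a b c) = int a - int c" for a b c
    by (simp add: wt_count cnt_nw len_nw)
  have eq: "GoodW n k i j = ?f ` Ts n k (int j - int i)"
  proof (rule equalityI; rule subsetI)
    fix v assume "v \<in> GoodW n k i j"
    then obtain a b c where v: "v = nw a b c" "length v = k" "(int i + wt v - int j) mod int n = 0"
      by (auto simp: GoodW_def)
    have e: "(int a - int c - (int j - int i)) = int i + wt v - int j" using v(1) wtn by simp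
    have "(int a - int c - (int j - int i)) mod int n = 0" unfolding e by (rule v(3))
    then have "(a, b, c) \<in> Ts n k (int j - int i)" using v len_nw by (simp add: Ts_def)
    then show "v \<in> ?f ` Ts n k (int j - int i)" using v(1) by (auto intro!: image_eqI[of _ _ "(a, b, c)"])
  next
    fix v assume "v \<in> ?f ` Ts n k (int j - int i)"
    then obtain a b c where v: "v = nw a b c" "a + 2 * b + c = k" "(int a - int c - (int j - int i)) mod int n = 0"
      by (auto simp: Ts_def)
    have e: "(int a - int c - (int j - int i)) = int i + wt v - int j" using v(1) wtn by simp
    have "(int i + wt v - int j) mod int n = 0" unfolding e[symmetric] by (rule v(3))
    then show "v \<in> GoodW n k i j" using v len_nw by (auto simp: GoodW_def)
  qed
  have inj: "inj_on ?f (Ts n k (int j - int i))"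
  proof (rule inj_onI)
    fix x y assume "x \<in> Ts n k (int j - int i)" "y \<in> Ts n k (int j - int i)" "?f x = ?f y"
    then have h: "?f x = ?f y" by simp
    obtain a b c where x: "x = (a, b, c)" by (cases x)
    obtain a' b' c' where y: "y = (a', b', c')" by (cases y)
    have "nw a b c = nw a' b' c'" using h x y by simp
    then have "wkey (nw a b c) = wkey (nw a' b' c')" by simp
    then show "x = y" using wkey_nw_inj x y by blast
  qed
  show ?thesis unfolding eq by (rule card_image[OF inj])
qed

lemma hilbB_eq: "hilbB n \<xi> = mat n n (\<lambda>(i, j). Nf n (int j - int i))"
proof -
  have "(\<lambda>(i, j). Abs_fps (\<lambda>k. int (hdim n \<xi> k i j))) = (\<lambda>(i, j). Nf n (int j - int i))"
    by (auto simp: fun_eq_iff Nf_def hdim_eq card_GoodW)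
  then show ?thesis unfolding hilbB_def by simp
qed

lemma adj_entry:
  assumes "l < n" "j < n"
  shows "adjM n $$ (l, j) = (if (l + 1) mod n = j then 1 else 0) + (if (j + 1) mod n = l then 1 else 0)"
proof -
  have "{a \<in> qarrows n. qsrc n a = l \<and> qtgt n a = j} =
     (if (l + 1) mod n = j then {Inl l} else {}) \<union> (if (j + 1) mod n = l then {Inr j} else {})"
  proof (rule Set.set_eqI)
    fix a :: "nat + nat"
    show "a \<in> {a \<in> qarrows n. qsrc n a = l \<and> qtgt n a = j} \<longleftrightarrow>
      a \<in> (if (l + 1) mod n = j then {Inl l} else {}) \<union> (if (j + 1) mod n = l then {Inr j} else {})"
      using assms by (cases a) (auto simp: qarrows_def qsrc_def qtgt_def)
  qed
  then show ?thesis using assms by (simp add: adjM_def)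
qed

lemma jm_char: "l < n \<Longrightarrow> j < n \<Longrightarrow> (l + 1) mod n = j \<longleftrightarrow> l = (j + n - 1) mod n"
proof -
  assume a: "l < n" "j < n"
  show ?thesis
  proof (cases j)
    case 0
    have "(0 + n - 1) mod n = n - 1" using npos by simp
    moreover have "(l + 1) mod n = 0 \<longleftrightarrow> l = n - 1"
    proof
      assume "(l + 1) mod n = 0"
      then have "l + 1 = n" using a by (metis Suc_eq_plus1 Suc_leI le_neq_implies_less mod_less zero_neq_one add_eq_0_iff_both_eq_0 zero_eq_add_iff_both_eq_0 nat.distinct(1))
      then show "l = n - 1" by simp
    next
      assume "l = n - 1" then show "(l + 1) mod n = 0" using npos by simp
    qed
    ultimately show ?thesis using 0 by simp
  next
    case (Suc j')
    have "(j + n - 1) mod n = j'" using Suc a by (simp add: mod_add_self2)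
    moreover have "(l + 1) mod n = j \<longleftrightarrow> l = j'"
    proof
      assume h: "(l + 1) mod n = j"
      show "l = j'"
      proof (cases "l + 1 = n")
        case True then show ?thesis using h Suc by simp
      next
        case False then have "l + 1 < n" using a by simp
        then show ?thesis using h Suc by simp
      qed
    next
      assume "l = j'" then show "(l + 1) mod n = j" using Suc a by simp
    qed
    ultimately show ?thesis by simp
  qed
qed

end


context rou begin

lemma Nf_shift_sum: "(\<Sum>j<n. Nf n (int j + c)) = (\<Sum>r<n. Nf n (int r))"
  using shift_sum[OF npos] by simp

lemma T_ident: "(\<Sum>r<n. Nf n (int r)) * ((1 - fps_X) ^ 2 * (1 - fps_X ^ 2)) = (1 :: int fps)"
proof -
  define T where "T = (\<Sum>r<n. Nf n (int r))"
  have s1: "(\<Sum>r<n. Nf n (int r - 1)) = T"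
    using Nf_shift_sum[of "-1"] unfolding T_def by simp
  have s2: "(\<Sum>r<n. Nf n (int r + 1)) = T"
    using Nf_shift_sum[of 1] unfolding T_def by simp
  have "(\<Sum>r<n. (1 - fps_X ^ 2) * ((1 + fps_X ^ 2) * Nf n (int r) - fps_X * (Nf n (int r - 1) + Nf n (int r + 1))))
      = (\<Sum>r<n. dlt n (int r))"
    by (intro sum.cong refl) (rule ident)
  also have "\<dots> = (\<Sum>r<n. if r = 0 then 1 else 0)"
  proof (intro sum.cong refl)
    fix r assume "r \<in> {..<n}"
    then have "int r mod int n = 0 \<longleftrightarrow> r = 0" by (auto simp: mod_pos_pos_trivial)
    then show "dlt n (int r) = (if r = 0 then 1 else 0)" by (simp add: dlt_def)
  qed
  also have "\<dots> = 1" using npos by simp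
  finally have e: "(\<Sum>r<n. (1 - fps_X ^ 2) * ((1 + fps_X ^ 2) * Nf n (int r) - fps_X * (Nf n (int r - 1) + Nf n (int r + 1)))) = 1" .
  have "(\<Sum>r<n. (1 - fps_X ^ 2) * ((1 + fps_X ^ 2) * Nf n (int r) - fps_X * (Nf n (int r - 1) + Nf n (int r + 1))))
      = (1 - fps_X ^ 2) * ((1 + fps_X ^ 2) * T - fps_X * ((\<Sum>r<n. Nf n (int r - 1)) + (\<Sum>r<n. Nf n (int r + 1))))"
    unfolding T_def by (simp add: sum_distrib_left sum_subtractf sum.distrib algebra_simps)
  also have "\<dots> = (1 - fps_X ^ 2) * ((1 + fps_X ^ 2) * T - fps_X * (T + T))" unfolding s1 s2 ..
  also have "\<dots> = T * ((1 - fps_X) ^ 2 * (1 - fps_X ^ 2))" by (simp add: algebra_simps power2_eq_square)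
  finally show ?thesis using e unfolding T_def by simp
qed

lemma tot_eq: "hilbB_tot n \<xi> = of_nat n * (\<Sum>r<n. Nf n (int r))"
proof -
  have "hilbB_tot n \<xi> = (\<Sum>i<n. \<Sum>j<n. Nf n (int j - int i))"
  proof (rule fps_ext)
    fix k
    show "fps_nth (hilbB_tot n \<xi>) k = fps_nth (\<Sum>i<n. \<Sum>j<n. Nf n (int j - int i)) k"
      by (simp add: hilbB_tot_def fps_sum_nth Nf_def hdim_eq card_GoodW)
  qed
  also have "\<dots> = (\<Sum>i<n. (\<Sum>r<n. Nf n (int r)))"
  proof (rule sum.cong[OF refl])
    fix i assume "i \<in> {..<n}"
    show "(\<Sum>j<n. Nf n (int j - int i)) = (\<Sum>r<n. Nf n (int r))"
      using Nf_shift_sum[of "- int i"] by simp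
  qed
  also have "\<dots> = of_nat n * (\<Sum>r<n. Nf n (int r))" by simp
  finally show ?thesis .
qed

lemma Q_entry:
  assumes "l < n" "j < n"
  shows "((1 - fps_X\<^sup>2) \<cdot>\<^sub>m (1\<^sub>m n - fps_X \<cdot>\<^sub>m map_mat of_nat (adjM n) + fps_X\<^sup>2 \<cdot>\<^sub>m 1\<^sub>m n)) $$ (l, j)
    = (1 - fps_X\<^sup>2) * ((1 + fps_X\<^sup>2) * (if l = j then 1 else 0)
         - fps_X * ((if l = (j + n - 1) mod n then 1 else 0) + (if l = (j + 1) mod n then 1 else 0)) :: int fps)"
proof -
  have "((1 - fps_X\<^sup>2) \<cdot>\<^sub>m (1\<^sub>m n - fps_X \<cdot>\<^sub>m map_mat of_nat (adjM n) + fps_X\<^sup>2 \<cdot>\<^sub>m 1\<^sub>m n)) $$ (l, j)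
    = (1 - fps_X\<^sup>2) * ((1\<^sub>m n $$ (l, j) - fps_X * of_nat (adjM n $$ (l, j))) + fps_X\<^sup>2 * 1\<^sub>m n $$ (l, j) :: int fps)"
    using assms by (simp add: adjM_def)
  also have "\<dots> = (1 - fps_X\<^sup>2) * ((1 + fps_X\<^sup>2) * (if l = j then 1 else 0)
         - fps_X * ((if l = (j + n - 1) mod n then 1 else 0) + (if l = (j + 1) mod n then 1 else 0)))"
  proof -
    have c1: "((l + 1) mod n = j) = (l = (j + n - 1) mod n)" by (rule jm_char[OF assms])
    have c2: "((j + 1) mod n = l) = (l = (j + 1) mod n)" by auto
    have adj: "adjM n $$ (l, j) = (if l = (j + n - 1) mod n then 1 else 0) + (if l = (j + 1) mod n then 1 else 0)"
      using adj_entry[OF assms] unfolding c1 c2 .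
    have adj': "(of_nat (adjM n $$ (l, j)) :: int fps) = (if l = (j + n - 1) mod n then 1 else 0) + (if l = (j + 1) mod n then 1 else 0)"
      unfolding adj by simp
    show ?thesis unfolding adj' using assms by (simp add: algebra_simps)
  qed
  finally show ?thesis .
qed

end

theorem lemma3p3:
  fixes n :: nat and \<xi> :: "'a::field_char_0"
  assumes alg_closed: "\<forall>p :: 'a poly. degree p > 0 \<longrightarrow> (\<exists>x. poly p x = 0)"
    and n2: "n \<ge> 2"
    and prim: "\<xi> ^ n = 1" "\<forall>m. 0 < m \<and> m < n \<longrightarrow> \<xi> ^ m \<noteq> 1"
  shows "hilbB n \<xi> *
           ((1 - fps_X\<^sup>2) \<cdot>\<^sub>m (1\<^sub>m n - fps_X \<cdot>\<^sub>m map_mat of_nat (adjM n) + fps_X\<^sup>2 \<cdot>\<^sub>m 1\<^sub>m n))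
         = 1\<^sub>m n \<and>
         hilbB_tot n \<xi> * ((1 - fps_X)\<^sup>2 * (1 - fps_X\<^sup>2)) = of_nat n"
proof -
  interpret rou n \<xi> using n2 prim by unfold_locales auto
  let ?Q = "(1 - fps_X\<^sup>2) \<cdot>\<^sub>m (1\<^sub>m n - fps_X \<cdot>\<^sub>m map_mat of_nat (adjM n) + fps_X\<^sup>2 \<cdot>\<^sub>m 1\<^sub>m n) :: int fps mat"
  have dQ: "dim_row ?Q = n" "dim_col ?Q = n" by simp_all
  have H: "hilbB n \<xi> = mat n n (\<lambda>(i, j). Nf n (int j - int i))" by (rule hilbB_eq)
  have entry: "(hilbB n \<xi> * ?Q) $$ (i, j) = 1\<^sub>m n $$ (i, j)" if ij: "i < n" "j < n" for i j
  proof -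
    define jm where "jm = (j + n - 1) mod n"
    define jp where "jp = (j + 1) mod n"
    have jmn: "jm < n" "jp < n" using npos by (simp_all add: jm_def jp_def)
    define A where "A = ((1 - fps_X\<^sup>2) * (1 + fps_X\<^sup>2) :: int fps)"
    define B where "B = ((1 - fps_X\<^sup>2) * fps_X :: int fps)"
    have "(hilbB n \<xi> * ?Q) $$ (i, j) = (\<Sum>l\<in>{0..<n}. Nf n (int l - int i) * ?Q $$ (l, j))"
      using ij by (simp add: H scalar_prod_def)
    also have "\<dots> = (\<Sum>l\<in>{0..<n}. (if l = j then A * Nf n (int l - int i) else 0)
         - (if l = jm then B * Nf n (int l - int i) else 0) - (if l = jp then B * Nf n (int l - int i) else 0))"
    proof (intro sum.cong refl)
      fix l assume "l \<in> {0..<n}"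
      then have l: "l < n" by simp
      show "Nf n (int l - int i) * ?Q $$ (l, j) = (if l = j then A * Nf n (int l - int i) else 0)
         - (if l = jm then B * Nf n (int l - int i) else 0) - (if l = jp then B * Nf n (int l - int i) else 0)"
        unfolding Q_entry[OF l ij(2)] jm_def[symmetric] jp_def[symmetric] A_def B_def
        by (simp add: algebra_simps)
    qed
    also have "\<dots> = A * Nf n (int j - int i) - B * Nf n (int jm - int i) - B * Nf n (int jp - int i)"
      using ij jmn by (simp add: sum_subtractf sum.delta)
    also have "Nf n (int jm - int i) = Nf n (int j - int i - 1)"
    proof (rule Nf_mod)
      have "int jm = int j + int n - 1 - int n * int ((j + n - 1) div n)"
        using int_mod_nat[of "j + n - 1"] npos unfolding jm_def by (simp add: of_nat_diff)
      then have d: "int jm - int i - (int j - int i - 1) = int n * (1 - int ((j + n - 1) div n))"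
        by (simp add: algebra_simps)
      show "(int jm - int i) mod int n = (int j - int i - 1) mod int n"
        unfolding mod_eq_dvd_iff d by simp
    qed
    also have "Nf n (int jp - int i) = Nf n (int j - int i + 1)"
    proof (rule Nf_mod)
      have "int jp = int j + 1 - int n * int ((j + 1) div n)"
        using int_mod_nat[of "j + 1"] unfolding jp_def by simp
      then have d: "int jp - int i - (int j - int i + 1) = int n * (- int ((j + 1) div n))"
        by (simp add: algebra_simps)
      show "(int jp - int i) mod int n = (int j - int i + 1) mod int n"
        unfolding mod_eq_dvd_iff d by simp
    qed
    also have "A * Nf n (int j - int i) - B * Nf n (int j - int i - 1) - B * Nf n (int j - int i + 1)
        = (1 - fps_X ^ 2) * ((1 + fps_X ^ 2) * Nf n (int j - int i) - fps_X * (Nf n (int j - int i - 1) + Nf n (int j - int i + 1)))"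
      unfolding A_def B_def by (simp add: algebra_simps)
    also have "\<dots> = dlt n (int j - int i)" by (rule ident)
    also have "\<dots> = 1\<^sub>m n $$ (i, j)"
    proof -
      have "(int j - int i) mod int n = 0 \<longleftrightarrow> i = j"
      proof
        assume "(int j - int i) mod int n = 0"
        then have "int n dvd (int j - int i)" by (simp add: dvd_eq_mod_eq_0)
        moreover have "\<bar>int j - int i\<bar> < int n" using ij by simp
        ultimately show "i = j" using dvd_imp_le_int[of "int j - int i" "int n"] by (cases "int j - int i = 0") auto
      qed simp
      then show ?thesis using ij by (simp add: dlt_def)
    qed
    finally show ?thesis .
  qed
  have p1: "hilbB n \<xi> * ?Q = 1\<^sub>m n"
  proof (rule eq_matI)
    fix i j assume "i < dim_row (1\<^sub>m n :: int fps mat)" "j < dim_col (1\<^sub>m n :: int fps mat)"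
    then show "(hilbB n \<xi> * ?Q) $$ (i, j) = 1\<^sub>m n $$ (i, j)" by (intro entry) simp_all
  next
    show "dim_row (hilbB n \<xi> * ?Q) = dim_row (1\<^sub>m n :: int fps mat)" by (simp add: H)
  next
    show "dim_col (hilbB n \<xi> * ?Q) = dim_col (1\<^sub>m n :: int fps mat)" by simp
  qed
  have p2: "hilbB_tot n \<xi> * ((1 - fps_X)\<^sup>2 * (1 - fps_X\<^sup>2)) = of_nat n"
    unfolding tot_eq using T_ident by (simp add: mult.assoc)
  show ?thesis using p1 p2 by simp
qed


end
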